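(* Let $H$ be a cluster graph, let $a$ be the maximum number of vertices of a connected component of $H$, and suppose $H$ has exactly $b$ connected components with $a$ vertices. Let $q$ be an integer with $b\le q\le |V(H)|$, and let $R$ be obtained from $H$ by deleting exactly one vertex from each component of $H$ with $a$ vertices. Then for every integer $h$: $H$ has a $q$-deletion such that the maximum degree of the remaining graph is $h$ if and only if $R$ has a $(q-b)$-deletion such that the maximum degree of the remaining graph is $h$.
   Context: A cluster graph is a graph in which every connected component is a complete graph. For a graph $G=(V,E)$ and integer $x\in[0,|V|]$, a set $X\subseteq V$ with $|X|=x$ is an $x$-deletion set of $G$ if $\Delta(G-X)=\min\{\Delta(G-Y):Y\subseteq V,|Y|=x\}$; an $x$-deletion of $G$ is the removal of an $x$-deletion set. Thus "$G$ has an $x$-deletion with remaining maximum degree $h$" means $\min\{\Delta(G-Y):|Y|=x\}=h$. *)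

theory Defs
  imports Main
begin

text \<open>A finite simple graph is given by a finite vertex set V and a symmetric,
irreflexive adjacency relation E; only edges between vertices of V count.\<close>

definition simple_graph :: "'a set \<Rightarrow> ('a \<Rightarrow> 'a \<Rightarrow> bool) \<Rightarrow> bool" where
  "simple_graph V E \<longleftrightarrow> finite V \<and> (\<forall>x y. E x y \<longrightarrow> E y x) \<and> (\<forall>x. \<not> E x x)"

definition connected_in :: "'a set \<Rightarrow> ('a \<Rightarrow> 'a \<Rightarrow> bool) \<Rightarrow> 'a \<Rightarrow> 'a \<Rightarrow> bool" where
  "connected_in V E x y \<longleftrightarrow> (\<lambda>u v. E u v \<and> u \<in> V \<and> v \<in> V)\<^sup>*\<^sup>* x y"

definition component :: "'a set \<Rightarrow> ('a \<Rightarrow> 'a \<Rightarrow> bool) \<Rightarrow> 'a \<Rightarrow> 'a set" where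
  "component V E v = {u \<in> V. connected_in V E v u}"

definition components :: "'a set \<Rightarrow> ('a \<Rightarrow> 'a \<Rightarrow> bool) \<Rightarrow> 'a set set" where
  "components V E = component V E ` V"

definition cluster_graph :: "'a set \<Rightarrow> ('a \<Rightarrow> 'a \<Rightarrow> bool) \<Rightarrow> bool" where
  "cluster_graph V E \<longleftrightarrow> simple_graph V E \<and>
     (\<forall>C \<in> components V E. \<forall>x\<in>C. \<forall>y\<in>C. x \<noteq> y \<longrightarrow> E x y)"

definition degree :: "'a set \<Rightarrow> ('a \<Rightarrow> 'a \<Rightarrow> bool) \<Rightarrow> 'a \<Rightarrow> nat" where
  "degree V E v = card {u \<in> V. E v u}"

definition max_degree :: "'a set \<Rightarrow> ('a \<Rightarrow> 'a \<Rightarrow> bool) \<Rightarrow> nat" where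
  "max_degree V E = Max (insert 0 (degree V E ` V))"

text \<open>min {\<Delta>(G - Y) : Y \<subseteq> V, |Y| = x}: the remaining maximum degree of an x-deletion.\<close>
definition deletion_value :: "'a set \<Rightarrow> ('a \<Rightarrow> 'a \<Rightarrow> bool) \<Rightarrow> nat \<Rightarrow> nat" where
  "deletion_value V E x = Min {max_degree (V - Y) E | Y. Y \<subseteq> V \<and> card Y = x}"

end

theory Submission
  imports Defs
begin

lemma conn_sym:
  assumes "simple_graph V E" "connected_in V E x y"
  shows "connected_in V E y x"
  using assms(2) unfolding connected_in_def
proof (induction rule: rtranclp_induct)
  case base show ?case by simp
next
  case (step y z)
  then have "E z y \<and> z \<in> V \<and> y \<in> V" using assms(1) by (auto simp: simple_graph_def)
  then show ?case
    using step.IH converse_rtranclp_into_rtranclp[of "\<lambda>u v. E u v \<and> u \<in> V \<and> v \<in> V" z y x]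
    by blast
qed

lemma comp_eq:
  assumes "simple_graph V E" "u \<in> component V E v"
  shows "component V E u = component V E v"
proof -
  have cvu: "connected_in V E v u" using assms(2) by (simp add: component_def)
  have cuv: "connected_in V E u v" using conn_sym[OF assms(1) cvu] .
  show ?thesis
    using cvu cuv unfolding component_def connected_in_def
    by (auto intro: rtranclp_trans)
qed

lemma comp_self: "v \<in> V \<Longrightarrow> v \<in> component V E v"
  by (simp add: component_def connected_in_def)

lemma comp_sub: "component V E v \<subseteq> V"
  by (auto simp: component_def)

lemma comp_step: "u \<in> V \<Longrightarrow> v \<in> V \<Longrightarrow> E v u \<Longrightarrow> u \<in> component V E v"
  by (auto simp: component_def connected_in_def intro: r_into_rtranclp)

lemma nbhd:
  assumes "cluster_graph V E" "v \<in> V" "W \<subseteq> V"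
  shows "{u \<in> W. E v u} = (component V E v \<inter> W) - {v}"
proof
  have irr: "\<not> E v v" using assms(1) unfolding cluster_graph_def simple_graph_def by blast
  show "{u \<in> W. E v u} \<subseteq> component V E v \<inter> W - {v}"
  proof
    fix u assume u: "u \<in> {u \<in> W. E v u}"
    then have "u \<in> V" "E v u" "u \<in> W" using assms(3) by auto
    then have "u \<in> component V E v" using comp_step[of u V v E] assms(2) by blast
    moreover have "u \<noteq> v" using irr \<open>E v u\<close> by auto
    ultimately show "u \<in> component V E v \<inter> W - {v}" using \<open>u \<in> W\<close> by blast
  qed
next
  have C: "component V E v \<in> components V E" using assms(2) by (simp add: components_def)
  have cl: "\<forall>C \<in> components V E. \<forall>x\<in>C. \<forall>y\<in>C. x \<noteq> y \<longrightarrow> E x y"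
    using assms(1) unfolding cluster_graph_def by (elim conjE)
  show "component V E v \<inter> W - {v} \<subseteq> {u \<in> W. E v u}"
  proof
    fix u assume u: "u \<in> component V E v \<inter> W - {v}"
    then have uc: "u \<in> component V E v" "v \<noteq> u" by auto
    have "E v u" by (rule cl[rule_format, OF C comp_self[OF assms(2)] uc])
    then show "u \<in> {u \<in> W. E v u}" using u by blast
  qed
qed

lemma deg_formula:
  assumes "cluster_graph V E" "W \<subseteq> V" "v \<in> W"
  shows "degree W E v = card (component V E v \<inter> W) - 1"
proof -
  have v: "v \<in> V" using assms by auto
  have fin: "finite (component V E v \<inter> W)"
    using assms(1) comp_sub[of V E v] by (auto simp: cluster_graph_def simple_graph_def intro: finite_subset)
  have "v \<in> component V E v \<inter> W" using comp_self[OF v] assms(3) by auto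
  then show ?thesis unfolding degree_def nbhd[OF assms(1) v assms(2)]
    using fin by (simp add: card_Diff_singleton)
qed

lemma md_ge: "finite W \<Longrightarrow> v \<in> W \<Longrightarrow> degree W E v \<le> max_degree W E"
  unfolding max_degree_def by (rule Max_ge) auto

lemma md_le: "finite W \<Longrightarrow> (\<forall>v\<in>W. degree W E v \<le> M) \<Longrightarrow> max_degree W E \<le> M"
  unfolding max_degree_def by (subst Max_le_iff) auto

lemma exch:
  assumes cl: "cluster_graph V E"
    and ca: "\<forall>v\<in>V. card (component V E v) \<le> a"
    and sa: "\<forall>s\<in>S. card (component V E s) = a \<and> S \<inter> component V E s = {s}"
    and SV: "S \<subseteq> V" and qV: "q \<le> card V" and Sq: "card S \<le> q"
  shows "Y \<subseteq> V \<Longrightarrow> card Y = q \<Longrightarrow>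
     \<exists>Z. S \<subseteq> Z \<and> Z \<subseteq> V \<and> card Z = q \<and> max_degree (V - Z) E \<le> max_degree (V - Y) E"
proof (induction "card (S - Y)" arbitrary: Y rule: less_induct)
  case less
  have sg: "simple_graph V E" using cl by (simp add: cluster_graph_def)
  have finV: "finite V" using sg by (simp add: simple_graph_def)
  have finS: "finite S" using SV finV finite_subset by blast
  show ?case
  proof (cases "S - Y = {}")
    case True
    then show ?thesis using less.prems by blast
  next
    case False
    then obtain s where s: "s \<in> S" "s \<notin> Y" by blast
    have sV: "s \<in> V" using s SV by auto
    show ?thesis
    proof (cases "component V E s \<inter> Y = {}")
      case True
      have "card (V - S) \<ge> q - card S" using qV Sq finS SV by (simp add: card_Diff_subset)
      then obtain T where T: "T \<subseteq> V - S" "card T = q - card S" "finite T"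
        by (meson obtain_subset_with_card_n)
      define Z where "Z = S \<union> T"
      have cZ: "card Z = q" unfolding Z_def using T finS Sq
        by (subst card_Un_disjoint) auto
      have "degree (V - Y) E s = card (component V E s \<inter> (V - Y)) - 1"
        using deg_formula[OF cl, of "V - Y" s] sV s by auto
      also have "component V E s \<inter> (V - Y) = component V E s"
        using True comp_sub[of V E s] by auto
      finally have ds: "degree (V - Y) E s = a - 1" using sa s by auto
      have "max_degree (V - Y) E \<ge> a - 1"
        using md_ge[of "V - Y" s E] ds finV sV s by auto
      moreover have "max_degree (V - Z) E \<le> a - 1"
      proof (rule md_le)
        show "finite (V - Z)" using finV by auto
        show "\<forall>v\<in>V - Z. degree (V - Z) E v \<le> a - 1"
        proof
          fix v assume v: "v \<in> V - Z"
          have "degree (V - Z) E v = card (component V E v \<inter> (V - Z)) - 1"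
            using deg_formula[OF cl, of "V - Z" v] v by auto
          also have "\<dots> \<le> card (component V E v) - 1"
            using finV comp_sub[of V E v]
            by (meson Int_lower1 card_mono diff_le_mono finite_subset)
          also have "\<dots> \<le> a - 1" using ca v by (simp add: diff_le_mono)
          finally show "degree (V - Z) E v \<le> a - 1" .
        qed
      qed
      ultimately show ?thesis using cZ T SV unfolding Z_def by auto
    next
      case False
      then obtain y where y: "y \<in> component V E s" "y \<in> Y" by blast
      have ys: "y \<noteq> s" using y s by auto
      have yS: "y \<notin> S" using sa s y ys by auto
      have yV: "y \<in> V" using y comp_sub by fast
      have cys: "component V E y = component V E s" using comp_eq[OF sg y(1)] .
      define Y1 where "Y1 = insert s (Y - {y})"
      have finY: "finite Y" using less.prems finV finite_subset by blast
      have Y1V: "Y1 \<subseteq> V" using less.prems sV yV unfolding Y1_def by auto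
      have cY1: "card Y1 = q" unfolding Y1_def using finY y s less.prems
        by (simp add: card_Diff_singleton) (metis One_nat_def Suc_pred card_gt_0_iff emptyE)
      have lt: "card (S - Y1) < card (S - Y)"
      proof -
        have "S - Y1 \<subseteq> (S - Y) - {s}" unfolding Y1_def using yS by auto
        moreover have "(S - Y) - {s} \<subset> S - Y" using s by auto
        ultimately have "S - Y1 \<subset> S - Y" by blast
        then show ?thesis using finS by (meson finite_Diff psubset_card_mono)
      qed
      have "max_degree (V - Y1) E \<le> max_degree (V - Y) E"
      proof (rule md_le)
        show "finite (V - Y1)" using finV by auto
        show "\<forall>v\<in>V - Y1. degree (V - Y1) E v \<le> max_degree (V - Y) E"
        proof
          fix v assume v: "v \<in> V - Y1"
          have dv: "degree (V - Y1) E v = card (component V E v \<inter> (V - Y1)) - 1"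
            using deg_formula[OF cl, of "V - Y1" v] v by auto
          show "degree (V - Y1) E v \<le> max_degree (V - Y) E"
          proof (cases "component V E v = component V E s")
            case True
            have eq: "component V E s \<inter> (V - Y1) = insert y (component V E s \<inter> (V - Y) - {s})"
            proof -
              have "V - Y1 = insert y (V - Y) - {s}" unfolding Y1_def using y(2) yV ys by blast
              then show ?thesis using y(1) ys by blast
            qed
            have fC: "finite (component V E s \<inter> (V - Y))" using finV by auto
            have "card (component V E s \<inter> (V - Y1)) = card (component V E s \<inter> (V - Y))"
            proof -
              have sin: "s \<in> component V E s \<inter> (V - Y)" using s sV comp_self[OF sV] by auto
              have yn: "y \<notin> component V E s \<inter> (V - Y) - {s}" using y by auto
              have "card (insert y (component V E s \<inter> (V - Y) - {s}))
                  = Suc (card (component V E s \<inter> (V - Y) - {s}))"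
                using yn fC by (meson card_insert_disjoint finite_Diff)
              also have "\<dots> = card (component V E s \<inter> (V - Y))"
              proof -
                have "card (component V E s \<inter> (V - Y)) > 0" using sin fC card_gt_0_iff by blast
                then show ?thesis using sin fC by (simp add: card_Diff_singleton)
              qed
              finally show ?thesis unfolding eq .
            qed
            then have "degree (V - Y1) E v = degree (V - Y) E s"
              using dv True deg_formula[OF cl, of "V - Y" s] sV s by auto
            then show ?thesis using md_ge[of "V - Y" s E] finV sV s by auto
          next
            case False
            have nsy: "s \<notin> component V E v" "y \<notin> component V E v"
              using False comp_eq[OF sg] cys by metis+
            have vY: "v \<in> V - Y" using v nsy comp_self[of v V E] unfolding Y1_def by auto
            have "component V E v \<inter> (V - Y1) = component V E v \<inter> (V - Y)"
              unfolding Y1_def using nsy by auto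
            then have "degree (V - Y1) E v = degree (V - Y) E v"
              using dv deg_formula[OF cl, of "V - Y" v] vY by auto
            then show ?thesis using md_ge[of "V - Y" v E] finV vY by auto
          qed
        qed
      qed
      moreover from less.hyps[OF lt Y1V cY1]
      obtain Z where Z: "S \<subseteq> Z \<and> Z \<subseteq> V \<and> card Z = q \<and> max_degree (V - Z) E \<le> max_degree (V - Y1) E"
        by (elim exE)
      ultimately have "max_degree (V - Z) E \<le> max_degree (V - Y) E" by linarith
      then show ?thesis using Z by (intro exI[of _ Z]) simp
    qed
  qed
qed

theorem lemma23:
  fixes V :: "'a set" and E :: "'a \<Rightarrow> 'a \<Rightarrow> bool" and S :: "'a set"
    and a b q h :: nat
  assumes "cluster_graph V E"
    and "a = Max (card ` components V E)"
    and "b = card {C \<in> components V E. card C = a}"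
    and "b \<le> q" and "q \<le> card V"
    and "S \<subseteq> \<Union> {C \<in> components V E. card C = a}"
    and "\<forall>C \<in> components V E. card C = a \<longrightarrow> card (S \<inter> C) = 1"
  shows "deletion_value V E q = h \<longleftrightarrow> deletion_value (V - S) E (q - b) = h"
proof -
  note cl = assms(1)
  have sg: "simple_graph V E" using cl by (simp add: cluster_graph_def)
  have finV: "finite V" using sg by (simp add: simple_graph_def)
  have finC: "finite (components V E)" using finV by (simp add: components_def)
  define I where "I = {C \<in> components V E. card C = a}"
  have ca: "\<forall>v\<in>V. card (component V E v) \<le> a"
  proof
    fix v assume "v \<in> V"
    then have "component V E v \<in> components V E" by (simp add: components_def)
    then show "card (component V E v) \<le> a" using assms(2) finC by simp
  qed
  have IC: "\<And>C x. C \<in> I \<Longrightarrow> x \<in> C \<Longrightarrow> C = component V E x"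
  proof -
    fix C x assume "C \<in> I" "x \<in> C"
    then obtain w where "C = component V E w" unfolding I_def components_def by auto
    then show "C = component V E x" using comp_eq[OF sg] \<open>x \<in> C\<close> by metis
  qed
  have sa: "\<forall>s\<in>S. card (component V E s) = a \<and> S \<inter> component V E s = {s}"
  proof
    fix s assume s: "s \<in> S"
    then obtain C where C: "C \<in> I" "s \<in> C" using assms(6) unfolding I_def by auto
    have Cs: "C = component V E s" using IC C by blast
    have "card (S \<inter> C) = 1" using assms(7) C unfolding I_def by auto
    then obtain t where "S \<inter> C = {t}" by (meson card_1_singletonE)
    then have "S \<inter> C = {s}" using s C by auto
    then show "card (component V E s) = a \<and> S \<inter> component V E s = {s}"
      using C Cs unfolding I_def by auto
  qed
  have CV: "\<forall>C\<in>components V E. C \<subseteq> V" unfolding components_def using comp_sub[of V E] by blast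
  have SV: "S \<subseteq> V" using assms(6) CV by blast
  have finS: "finite S" using SV finV finite_subset by blast
  have SU: "S = (\<Union>C\<in>I. S \<inter> C)" using assms(6) unfolding I_def by auto
  have cS: "card S = b"
  proof -
    have fI: "finite I" using finC unfolding I_def by simp
    have fA: "\<forall>C\<in>I. finite (S \<inter> C)" using finS by simp
    have dj: "\<forall>C\<in>I. \<forall>D\<in>I. C \<noteq> D \<longrightarrow> (S \<inter> C) \<inter> (S \<inter> D) = {}"
    proof (intro ballI impI)
      fix C D assume CD: "C \<in> I" "D \<in> I" "C \<noteq> D"
      show "(S \<inter> C) \<inter> (S \<inter> D) = {}"
      proof (rule ccontr)
        assume "(S \<inter> C) \<inter> (S \<inter> D) \<noteq> {}"
        then obtain x where "x \<in> C" "x \<in> D" by blast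
        then have "C = component V E x" "D = component V E x" using IC CD by blast+
        then show False using CD by simp
      qed
    qed
    have "card S = card (\<Union>C\<in>I. S \<inter> C)" using SU by simp
    also have "\<dots> = (\<Sum>C\<in>I. card (S \<inter> C))"
      by (rule card_UN_disjoint[OF fI fA dj])
    also have "\<dots> = (\<Sum>C\<in>I. 1)" using assms(7) unfolding I_def by simp
    finally show ?thesis using assms(3) unfolding I_def by simp
  qed
  define AH where "AH = {max_degree (V - Y) E | Y. Y \<subseteq> V \<and> card Y = q}"
  define AR where "AR = {max_degree ((V - S) - Y) E | Y. Y \<subseteq> V - S \<and> card Y = q - b}"
  have sub: "AR \<subseteq> AH"
  proof
    fix x assume "x \<in> AR"
    then obtain Y where Y: "Y \<subseteq> V - S" "card Y = q - b" "x = max_degree ((V - S) - Y) E"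
      unfolding AR_def by auto
    have "finite Y" using Y finV finite_subset by blast
    then have "card (Y \<union> S) = q" using Y cS finS assms(4) by (subst card_Un_disjoint) auto
    moreover have "V - (Y \<union> S) = (V - S) - Y" by auto
    moreover have "Y \<union> S \<subseteq> V" using Y SV by auto
    ultimately have "max_degree (V - (Y \<union> S)) E \<in> AH" unfolding AH_def by blast
    then show "x \<in> AH" using Y \<open>V - (Y \<union> S) = (V - S) - Y\<close> by simp
  qed
  have neR: "AR \<noteq> {}"
  proof -
    have "card (V - S) \<ge> q - b" using assms(5) cS finS SV by (simp add: card_Diff_subset)
    then obtain T where "T \<subseteq> V - S" "card T = q - b" by (meson obtain_subset_with_card_n)
    then show ?thesis unfolding AR_def by auto
  qed
  have finH: "finite AH"
  proof -
    have "AH \<subseteq> (\<lambda>Y. max_degree (V - Y) E) ` Pow V" unfolding AH_def by auto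
    then show ?thesis using finV finite_subset by blast
  qed
  have finR: "finite AR" using finH sub finite_subset by blast
  have dom: "\<forall>x\<in>AH. \<exists>y\<in>AR. y \<le> x"
  proof
    fix x assume "x \<in> AH"
    then obtain Y where Y: "Y \<subseteq> V" "card Y = q" "x = max_degree (V - Y) E"
      unfolding AH_def by auto
    have Sq: "card S \<le> q" using cS assms(4) by simp
    from exch[OF cl ca sa SV assms(5) Sq Y(1) Y(2)]
    obtain Z where Z0: "S \<subseteq> Z \<and> Z \<subseteq> V \<and> card Z = q \<and> max_degree (V - Z) E \<le> max_degree (V - Y) E"
      by (elim exE)
    have Z: "S \<subseteq> Z" "Z \<subseteq> V" "card Z = q" "max_degree (V - Z) E \<le> x"
      using Z0 Y(3) by simp_all
    have "card (Z - S) = q - b" using Z cS finS by (simp add: card_Diff_subset)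
    moreover have "V - Z = (V - S) - (Z - S)" using Z by auto
    ultimately have "max_degree (V - Z) E \<in> AR" unfolding AR_def using Z by auto
    then show "\<exists>y\<in>AR. y \<le> x" using Z by auto
  qed
  have "Min AH = Min AR"
  proof (rule antisym)
    show "Min AH \<le> Min AR" using sub neR finH by (simp add: Min_antimono)
  next
    have "Min AH \<in> AH" using sub neR finH by (intro Min_in) auto
    then obtain y where "y \<in> AR" "y \<le> Min AH" using dom by blast
    then show "Min AR \<le> Min AH" using finR by (meson Min_le le_trans)
  qed
  then show ?thesis unfolding deletion_value_def AH_def AR_def by simp
qed

end
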